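(* Let the one-period market and the risk measure $\rho: L \to (-\infty,\infty]$ be as described in the context. Assume that $\Pi^\rho_0 = \{\mathbf{0}\}$, that $\rho_1 \in \mathbb{R}$, and that $\rho$ satisfies the Fatou property on $\mathcal{X} = \{X_\pi : \pi \in \mathbb{R}^d\}$, i.e. whenever $X_n, X \in \mathcal{X}$ with $X_n \to X$ $\mathbb{P}$-a.s. and $|X_n| \le Y$ $\mathbb{P}$-a.s. for some $Y \in L$, then $\rho(X) \le \liminf_{n\to\infty} \rho(X_n)$. Then for every $\nu \ge 0$ the set $\Pi^\rho_\nu$ of $\rho$-optimal portfolios for $\nu$ is nonempty and compact.
   Context: Let $(\Omega,\mathcal{F},\mathbb{P})$ be a probability space. The market consists of a riskless asset with $S^0_0 = 1$, $S^0_1 = 1+r$, $r > -1$, and $d$ risky assets $S^1,\dots,S^d$ with constants $S^i_0 > 0$ and real-valued $\mathcal{F}$-measurable $S^i_1$. Returns: $R^i := (S^i_1 - S^i_0)/S^i_0$, $R = (R^1,\dots,R^d)$. Standing assumptions: the market is nonredundant (if $\theta \in \mathbb{R}^{1+d}$ and $\sum_{i=0}^d \theta^i S^i_t = 0$ $\mathbb{P}$-a.s. for $t\in\{0,1\}$, then $\theta = 0$); each $R^i \in L^1(\mathbb{P})$ with $\mu^i := \mathbb{E}[R^i]$; nondegeneracy: $\mu^i \neq r$ for some $i$. A portfolio is $\pi \in \mathbb{R}^d$; its excess return is $X_\pi := \pi\cdot(R - r\mathbf{1})$ with $\mathbf{1} = (1,\dots,1)$. For $\nu \in \mathbb{R}$,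 $\Pi_\nu := \{\pi \in \mathbb{R}^d : \mathbb{E}[X_\pi] = \nu\}$. $L$ is a Riesz space of random variables with $L^\infty \subset L \subset L^1$ containing all $X_\pi$, and $\rho: L \to (-\infty,\infty]$ is monotone ($X_1 \le X_2$ a.s. implies $\rho(X_1) \ge \rho(X_2)$), cash-invariant ($\rho(X+c) = \rho(X) - c$ for $c\in\mathbb{R}$) and positively homogeneous ($\rho(\lambda X) = \lambda\rho(X)$ for $\lambda \ge 0$). For $\nu \ge 0$: $\rho_\nu := \inf\{\rho(X_\pi) : \pi \in \Pi_\nu\} \in [-\infty,\infty]$, and $\Pi^\rho_\nu$ is the set of $\pi \in \Pi_\nu$ with $\rho(X_\pi) < \infty$ and $\rho(X_\pi) \le \rho(X_{\pi'})$ for all $\pi' \in \Pi_\nu$ ($\rho$-optimal portfolios for $\nu$). *)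

theory Defs
  imports "HOL-Probability.Probability"
begin

text \<open>One-period market with riskless rate r, initial prices S0 (a vector in real^'d,
  'd a finite index type of the d risky assets) and terminal prices S1 (random vector).\<close>

definition ret :: "real^'d \<Rightarrow> ('a \<Rightarrow> real^'d) \<Rightarrow> 'a \<Rightarrow> real^'d" where
  "ret S0 S1 \<omega> = (\<chi> i. (S1 \<omega> $ i - S0 $ i) / S0 $ i)"

definition excess_ret :: "real^'d \<Rightarrow> ('a \<Rightarrow> real^'d) \<Rightarrow> real \<Rightarrow> real^'d \<Rightarrow> 'a \<Rightarrow> real" where
  "excess_ret S0 S1 r \<pi> \<omega> = \<pi> \<bullet> (ret S0 S1 \<omega> - (\<chi> i. r))"

definition nonredundant :: "'a measure \<Rightarrow> real^'d \<Rightarrow> ('a \<Rightarrow> real^'d) \<Rightarrow> real \<Rightarrow> bool" where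
  "nonredundant M S0 S1 r \<longleftrightarrow>
     (\<forall>(\<theta>0::real) (\<theta>::real^'d).
        (\<theta>0 + \<theta> \<bullet> S0 = 0 \<and> (AE \<omega> in M. \<theta>0 * (1 + r) + \<theta> \<bullet> S1 \<omega> = 0))
        \<longrightarrow> \<theta>0 = 0 \<and> \<theta> = 0)"

definition Pi_nu :: "'a measure \<Rightarrow> real^'d \<Rightarrow> ('a \<Rightarrow> real^'d) \<Rightarrow> real \<Rightarrow> real \<Rightarrow> (real^'d) set" where
  "Pi_nu M S0 S1 r \<nu> = {\<pi>. (\<integral>\<omega>. excess_ret S0 S1 r \<pi> \<omega> \<partial>M) = \<nu>}"

definition rho_nu :: "'a measure \<Rightarrow> real^'d \<Rightarrow> ('a \<Rightarrow> real^'d) \<Rightarrow> real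
    \<Rightarrow> (('a \<Rightarrow> real) \<Rightarrow> ereal) \<Rightarrow> real \<Rightarrow> ereal" where
  "rho_nu M S0 S1 r \<rho> \<nu> = (INF \<pi>\<in>Pi_nu M S0 S1 r \<nu>. \<rho> (excess_ret S0 S1 r \<pi>))"

definition rho_opt :: "'a measure \<Rightarrow> real^'d \<Rightarrow> ('a \<Rightarrow> real^'d) \<Rightarrow> real
    \<Rightarrow> (('a \<Rightarrow> real) \<Rightarrow> ereal) \<Rightarrow> real \<Rightarrow> (real^'d) set" where
  "rho_opt M S0 S1 r \<rho> \<nu> = {\<pi> \<in> Pi_nu M S0 S1 r \<nu>.
      \<rho> (excess_ret S0 S1 r \<pi>) < \<infinity> \<and>
      (\<forall>\<pi>'\<in>Pi_nu M S0 S1 r \<nu>. \<rho> (excess_ret S0 S1 r \<pi>) \<le> \<rho> (excess_ret S0 S1 r \<pi>'))}"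

definition riesz_L :: "'a measure \<Rightarrow> ('a \<Rightarrow> real) set \<Rightarrow> bool" where
  "riesz_L M L \<longleftrightarrow>
     L \<subseteq> borel_measurable M \<and>
     (\<forall>f\<in>L. \<forall>g\<in>L. (\<lambda>\<omega>. f \<omega> + g \<omega>) \<in> L) \<and>
     (\<forall>f\<in>L. \<forall>c::real. (\<lambda>\<omega>. c * f \<omega>) \<in> L) \<and>
     (\<forall>f\<in>L. \<forall>g\<in>L. (\<lambda>\<omega>. max (f \<omega>) (g \<omega>)) \<in> L \<and> (\<lambda>\<omega>. min (f \<omega>) (g \<omega>)) \<in> L) \<and>
     (\<forall>f\<in>borel_measurable M. (\<exists>C. AE \<omega> in M. \<bar>f \<omega>\<bar> \<le> C) \<longrightarrow> f \<in> L) \<and>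
     (\<forall>f\<in>L. integrable M f)"

definition risk_measure :: "'a measure \<Rightarrow> ('a \<Rightarrow> real) set \<Rightarrow> (('a \<Rightarrow> real) \<Rightarrow> ereal) \<Rightarrow> bool" where
  "risk_measure M L \<rho> \<longleftrightarrow>
     (\<forall>X\<in>L. \<rho> X \<noteq> -\<infinity>) \<and>
     (\<forall>X1\<in>L. \<forall>X2\<in>L. (AE \<omega> in M. X1 \<omega> \<le> X2 \<omega>) \<longrightarrow> \<rho> X1 \<ge> \<rho> X2) \<and>
     (\<forall>X\<in>L. \<forall>c::real. \<rho> (\<lambda>\<omega>. X \<omega> + c) = \<rho> X - ereal c) \<and>
     (\<forall>X\<in>L. \<forall>a::real. a \<ge> 0 \<longrightarrow> \<rho> (\<lambda>\<omega>. a * X \<omega>) = ereal a * \<rho> X)"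

definition fatou_on_excess :: "'a measure \<Rightarrow> ('a \<Rightarrow> real) set \<Rightarrow> real^'d \<Rightarrow> ('a \<Rightarrow> real^'d)
    \<Rightarrow> real \<Rightarrow> (('a \<Rightarrow> real) \<Rightarrow> ereal) \<Rightarrow> bool" where
  "fatou_on_excess M L S0 S1 r \<rho> \<longleftrightarrow>
     (\<forall>(\<pi>s :: nat \<Rightarrow> real^'d) (\<pi> :: real^'d) Y.
        (AE \<omega> in M. (\<lambda>n. excess_ret S0 S1 r (\<pi>s n) \<omega>) \<longlonglongrightarrow> excess_ret S0 S1 r \<pi> \<omega>)
        \<and> Y \<in> L \<and> (\<forall>n. AE \<omega> in M. \<bar>excess_ret S0 S1 r (\<pi>s n) \<omega>\<bar> \<le> Y \<omega>)
        \<longrightarrow> \<rho> (excess_ret S0 S1 r \<pi>) \<le> liminf (\<lambda>n. \<rho> (excess_ret S0 S1 r (\<pi>s n))))"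

end

theory Submission
  imports Defs
begin

lemma er_scale: "excess_ret S0 S1 r (a *\<^sub>R \<pi>) = (\<lambda>\<omega>. a * excess_ret S0 S1 r \<pi> \<omega>)"
  by (simp add: excess_ret_def fun_eq_iff)

lemma er_zero: "excess_ret S0 S1 r 0 = (\<lambda>\<omega>. 0 * excess_ret S0 S1 r \<pi> \<omega>)"
  by (simp add: excess_ret_def fun_eq_iff)

lemma er_int:
  assumes "prob_space M" "\<forall>i. integrable M (\<lambda>\<omega>. ret S0 S1 \<omega> $ i)"
  shows "(\<integral>\<omega>. excess_ret S0 S1 r \<pi> \<omega> \<partial>M) = \<pi> \<bullet> (\<chi> i. (\<integral>\<omega>. ret S0 S1 \<omega> $ i \<partial>M) - r)"
proof -
  interpret prob_space M by fact
  define F where "F = (\<lambda>i \<omega>. \<pi>$i * (ret S0 S1 \<omega> $ i - r))"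
  have iF: "integrable M (F i)" for i
    unfolding F_def using assms(2) by (intro integrable_mult_right Bochner_Integration.integrable_diff) auto
  have "(\<integral>\<omega>. excess_ret S0 S1 r \<pi> \<omega> \<partial>M) = (\<integral>\<omega>. (\<Sum>i\<in>UNIV. F i \<omega>) \<partial>M)"
    by (simp add: excess_ret_def inner_vec_def F_def)
  also have "\<dots> = (\<Sum>i\<in>UNIV. (\<integral>\<omega>. F i \<omega> \<partial>M))"
    by (rule Bochner_Integration.integral_sum) (use iF in auto)
  also have "\<dots> = (\<Sum>i\<in>UNIV. \<pi>$i * ((\<integral>\<omega>. ret S0 S1 \<omega> $ i \<partial>M) - r))"
    using assms(2) by (simp add: F_def integral_diff prob_space)
  finally show ?thesis by (simp add: inner_vec_def)
qed

lemma er_bound: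
  "\<bar>excess_ret S0 S1 r \<pi> \<omega>\<bar> \<le> norm \<pi> * (\<Sum>i\<in>UNIV. \<bar>excess_ret S0 S1 r (axis i 1) \<omega>\<bar>)"
proof -
  define V where "V = ret S0 S1 \<omega> - (\<chi> i. r)"
  have ax: "excess_ret S0 S1 r (axis i 1) \<omega> = V $ i" for i
    by (simp add: excess_ret_def V_def inner_axis')
  have "\<bar>excess_ret S0 S1 r \<pi> \<omega>\<bar> = \<bar>\<Sum>i\<in>UNIV. \<pi>$i * V$i\<bar>"
    by (simp add: excess_ret_def V_def inner_vec_def)
  also have "\<dots> \<le> (\<Sum>i\<in>UNIV. \<bar>\<pi>$i\<bar> * \<bar>V$i\<bar>)"
    using sum_abs[of "\<lambda>i. \<pi>$i * V$i" UNIV] by (simp add: abs_mult)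
  also have "\<dots> \<le> (\<Sum>i\<in>UNIV. norm \<pi> * \<bar>V$i\<bar>)"
    by (intro sum_mono mult_right_mono component_le_norm_cart) auto
  finally show ?thesis by (simp add: ax sum_distrib_left)
qed

lemma sumabs_in_L:
  assumes "riesz_L M L" "\<forall>\<pi>. excess_ret S0 S1 r \<pi> \<in> L" "finite A"
  shows "(\<lambda>\<omega>. \<Sum>i\<in>A. \<bar>excess_ret S0 S1 r (axis i 1) \<omega>\<bar>) \<in> L"
  using assms(3)
proof (induction A rule: finite_induct)
  have add: "\<And>f g. f\<in>L \<Longrightarrow> g\<in>L \<Longrightarrow> (\<lambda>\<omega>. f \<omega> + g \<omega>) \<in> L"
    and smul: "\<And>f c. f\<in>L \<Longrightarrow> (\<lambda>\<omega>. c * f \<omega>) \<in> L"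
    and mx: "\<And>f g. f\<in>L \<Longrightarrow> g\<in>L \<Longrightarrow> (\<lambda>\<omega>. max (f \<omega>) (g \<omega>)) \<in> L"
    using assms(1) unfolding riesz_L_def by simp_all
  case empty
  have "(\<lambda>\<omega>. 0 * excess_ret S0 S1 r 0 \<omega>) \<in> L" using smul assms(2) by blast
  then show ?case by simp
next
  have add: "\<And>f g. f\<in>L \<Longrightarrow> g\<in>L \<Longrightarrow> (\<lambda>\<omega>. f \<omega> + g \<omega>) \<in> L"
    and smul: "\<And>f c. f\<in>L \<Longrightarrow> (\<lambda>\<omega>. c * f \<omega>) \<in> L"
    and mx: "\<And>f g. f\<in>L \<Longrightarrow> g\<in>L \<Longrightarrow> (\<lambda>\<omega>. max (f \<omega>) (g \<omega>)) \<in> L"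
    using assms(1) unfolding riesz_L_def by simp_all
  case (insert x F)
  let ?X = "excess_ret S0 S1 r (axis x 1)"
  have X: "?X \<in> L" using assms(2) by blast
  have "(\<lambda>\<omega>. max (?X \<omega>) ((-1) * ?X \<omega>)) \<in> L" by (rule mx[OF X smul[OF X]])
  moreover have "(\<lambda>\<omega>. max (?X \<omega>) ((-1) * ?X \<omega>)) = (\<lambda>\<omega>. \<bar>?X \<omega>\<bar>)" by (auto simp: fun_eq_iff)
  ultimately have "(\<lambda>\<omega>. \<bar>?X \<omega>\<bar>) \<in> L" by simp
  then have "(\<lambda>\<omega>. \<bar>?X \<omega>\<bar> + (\<Sum>i\<in>F. \<bar>excess_ret S0 S1 r (axis i 1) \<omega>\<bar>)) \<in> L"
    using insert.IH by (rule add)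
  then show ?case using insert.hyps by simp
qed

lemma lsc:
  assumes "riesz_L M L" "\<forall>\<pi>. excess_ret S0 S1 r \<pi> \<in> L" "fatou_on_excess M L S0 S1 r \<rho>"
    and lim: "p \<longlonglongrightarrow> q"
  shows "\<rho> (excess_ret S0 S1 r q) \<le> liminf (\<lambda>n. \<rho> (excess_ret S0 S1 r (p n)))"
proof -
  obtain B where B: "\<And>n. norm (p n) \<le> B"
    using convergent_imp_bounded[OF lim] unfolding bounded_iff by auto
  define Y where "Y = (\<lambda>\<omega>. B * (\<Sum>i\<in>UNIV. \<bar>excess_ret S0 S1 r (axis i 1) \<omega>\<bar>))"
  have smul: "\<And>f c. f\<in>L \<Longrightarrow> (\<lambda>\<omega>. c * f \<omega>) \<in> L"
    using assms(1) unfolding riesz_L_def by simp_all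
  have Y: "Y \<in> L" unfolding Y_def by (rule smul[OF sumabs_in_L[OF assms(1,2)]]) simp
  have bd: "\<bar>excess_ret S0 S1 r (p n) \<omega>\<bar> \<le> Y \<omega>" for n \<omega>
  proof -
    have "\<bar>excess_ret S0 S1 r (p n) \<omega>\<bar> \<le> norm (p n) * (\<Sum>i\<in>UNIV. \<bar>excess_ret S0 S1 r (axis i 1) \<omega>\<bar>)"
      by (rule er_bound)
    also have "\<dots> \<le> Y \<omega>" unfolding Y_def
      by (intro mult_right_mono B sum_nonneg) auto
    finally show ?thesis .
  qed
  have cv: "(\<lambda>n. excess_ret S0 S1 r (p n) \<omega>) \<longlonglongrightarrow> excess_ret S0 S1 r q \<omega>" for \<omega>
    unfolding excess_ret_def by (intro tendsto_intros lim)
  have F: "\<And>\<pi>s \<pi> Y. (AE \<omega> in M. (\<lambda>n. excess_ret S0 S1 r (\<pi>s n) \<omega>) \<longlonglongrightarrow> excess_ret S0 S1 r \<pi> \<omega>)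
        \<and> Y \<in> L \<and> (\<forall>n. AE \<omega> in M. \<bar>excess_ret S0 S1 r (\<pi>s n) \<omega>\<bar> \<le> Y \<omega>)
        \<Longrightarrow> \<rho> (excess_ret S0 S1 r \<pi>) \<le> liminf (\<lambda>n. \<rho> (excess_ret S0 S1 r (\<pi>s n)))"
    using assms(3) unfolding fatou_on_excess_def by blast
  show ?thesis
    by (rule F[where Y=Y]) (simp add: cv Y bd)
qed

theorem theorem3p11:
  fixes M :: "'a measure" and S0 :: "real^'d" and S1 :: "'a \<Rightarrow> real^'d" and r :: real
    and L :: "('a \<Rightarrow> real) set" and \<rho> :: "('a \<Rightarrow> real) \<Rightarrow> ereal"
  assumes "prob_space M"
    and "r > -1"
    and "\<forall>i. S0 $ i > 0"
    and "S1 \<in> borel_measurable M"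
    and "nonredundant M S0 S1 r"
    and "\<forall>i. integrable M (\<lambda>\<omega>. ret S0 S1 \<omega> $ i)"
    and "\<exists>i. (\<integral>\<omega>. ret S0 S1 \<omega> $ i \<partial>M) \<noteq> r"
    and "riesz_L M L"
    and "\<forall>\<pi>. excess_ret S0 S1 r \<pi> \<in> L"
    and "risk_measure M L \<rho>"
    and "rho_opt M S0 S1 r \<rho> 0 = {0}"
    and "rho_nu M S0 S1 r \<rho> 1 \<noteq> \<infinity>" and "rho_nu M S0 S1 r \<rho> 1 \<noteq> -\<infinity>"
    and "fatou_on_excess M L S0 S1 r \<rho>"
  shows "\<forall>\<nu>\<ge>0. rho_opt M S0 S1 r \<rho> \<nu> \<noteq> {} \<and> compact (rho_opt M S0 S1 r \<rho> \<nu>)"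
proof (intro allI impI)
  fix \<nu> :: real assume nu: "\<nu> \<ge> 0"
  define f where "f = (\<lambda>\<pi>. \<rho> (excess_ret S0 S1 r \<pi>))"
  define m where "m = (\<chi> i. (\<integral>\<omega>. ret S0 S1 \<omega> $ i \<partial>M) - r)"
  have Pi: "Pi_nu M S0 S1 r c = {\<pi>. \<pi> \<bullet> m = c}" for c
    unfolding Pi_nu_def m_def using er_int[OF assms(1,6)] by simp
  have opt: "rho_opt M S0 S1 r \<rho> c = {\<pi>. \<pi> \<bullet> m = c \<and> f \<pi> < \<infinity> \<and> (\<forall>\<pi>'. \<pi>' \<bullet> m = c \<longrightarrow> f \<pi> \<le> f \<pi>')}" for c
    unfolding rho_opt_def Pi f_def by auto
  have notinf: "f \<pi> \<noteq> -\<infinity>" for \<pi>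
    using assms(9,10) unfolding risk_measure_def f_def by blast
  have hom: "f (a *\<^sub>R \<pi>) = ereal a * f \<pi>" if "0 \<le> a" for a \<pi>
  proof -
    have "\<forall>X\<in>L. \<forall>a::real. a \<ge> 0 \<longrightarrow> \<rho> (\<lambda>\<omega>. a * X \<omega>) = ereal a * \<rho> X"
      using assms(10) unfolding risk_measure_def by blast
    then show ?thesis using assms(9) that unfolding f_def er_scale by blast
  qed
  have f0: "f 0 = 0"
  proof -
    have "f 0 = ereal 0 * f 0" using hom[of 0 0] by simp
    also have "ereal 0 * f 0 = 0" by (simp add: zero_ereal_def[symmetric])
    finally show ?thesis .
  qed
  have lscf: "f q \<le> liminf (\<lambda>n. f (p n))" if "p \<longlonglongrightarrow> q" for p q
    unfolding f_def by (rule lsc[OF assms(8,9,14) that])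
  have pos: "f \<pi> > 0" if "\<pi> \<bullet> m = 0" "\<pi> \<noteq> 0" for \<pi>
  proof (rule ccontr)
    assume "\<not> f \<pi> > 0"
    then have le: "f \<pi> \<le> 0" by simp
    have "0 \<in> rho_opt M S0 S1 r \<rho> 0" using assms(11) by simp
    then have ge: "\<And>\<pi>'. \<pi>' \<bullet> m = 0 \<Longrightarrow> 0 \<le> f \<pi>'" unfolding opt using f0 by auto
    have "\<pi> \<in> rho_opt M S0 S1 r \<rho> 0"
      unfolding opt using le ge[OF that(1)] ge that(1) by (auto intro: order.trans)
    then show False using assms(11) that(2) by simp
  qed
  define K where "K = (\<lambda>C. {\<pi>. \<pi> \<bullet> m = \<nu> \<and> f \<pi> \<le> ereal C})"
  have bdd: "bounded (K C)" for C
  proof (rule ccontr)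
    assume "\<not> bounded (K C)"
    then have "\<forall>n::nat. \<exists>x\<in>K C. real n < norm x" unfolding bounded_iff by (meson not_le)
    then obtain g where g: "\<And>n. g n \<in> K C" "\<And>n. real n < norm (g n)" by metis
    have npos: "0 < norm (g n)" for n using g(2)[of n] by linarith
    define u where "u = (\<lambda>n. (1 / norm (g n)) *\<^sub>R g n)"
    have nu1: "norm (u n) = 1" for n using npos[of n] by (simp add: u_def)
    have "compact (cball (0::real^'d) 1)" by simp
    then have "seq_compact (cball (0::real^'d) 1)" by (rule compact_imp_seq_compact)
    moreover have "\<forall>n. u n \<in> cball 0 1" using nu1 by simp
    ultimately obtain l s where s: "strict_mono s" and ul: "(u \<circ> s) \<longlonglongrightarrow> l"
      by (rule seq_compactE)
    have "(\<lambda>n. norm ((u \<circ> s) n)) \<longlonglongrightarrow> norm l" by (intro tendsto_intros ul)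
    then have "norm l = 1" using nu1 by (simp add: LIMSEQ_const_iff)
    then have l0: "l \<noteq> 0" by auto
    have at: "filterlim (\<lambda>n. norm (g (s n))) at_top sequentially"
    proof (rule filterlim_at_top_mono[OF filterlim_real_sequentially])
      show "\<forall>\<^sub>F n in sequentially. real n \<le> norm (g (s n))"
        using g(2) seq_suble[OF s] by (auto intro!: always_eventually order.trans[OF _ less_imp_le[OF g(2)]])
    qed
    have ld: "(\<lambda>n. c / norm (g (s n))) \<longlonglongrightarrow> 0" for c
      by (rule tendsto_divide_0[OF tendsto_const filterlim_at_top_imp_at_infinity[OF at]])
    have "(\<lambda>n. (u \<circ> s) n \<bullet> m) \<longlonglongrightarrow> l \<bullet> m" by (intro tendsto_intros ul)
    moreover have "(u \<circ> s) n \<bullet> m = \<nu> / norm (g (s n))" for n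
      using g(1)[of "s n"] by (simp add: u_def K_def)
    ultimately have "(\<lambda>n. \<nu> / norm (g (s n))) \<longlonglongrightarrow> l \<bullet> m" by simp
    then have lm: "l \<bullet> m = 0" using ld[of \<nu>] LIMSEQ_unique by blast
    have fu: "f (u n) \<le> ereal (C / norm (g n))" for n
    proof -
      have "f (u n) = ereal (1 / norm (g n)) * f (g n)" unfolding u_def
        using npos[of n] by (intro hom) simp
      also have "\<dots> \<le> ereal (1 / norm (g n)) * ereal C"
        using g(1)[of n] npos[of n] by (intro ereal_mult_left_mono) (auto simp: K_def)
      finally show ?thesis by simp
    qed
    have "f l \<le> liminf (\<lambda>n. f ((u \<circ> s) n))" by (rule lscf[OF ul])
    also have "\<dots> \<le> liminf (\<lambda>n. ereal (C / norm (g (s n))))"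
      using fu by (intro Liminf_mono always_eventually) auto
    also have "\<dots> = ereal 0"
      by (intro lim_imp_Liminf trivial_limit_sequentially tendsto_ereal ld)
    finally have "f l \<le> 0" by (simp add: zero_ereal_def)
    with pos[OF lm l0] show False by simp
  qed
  have cl: "closed (K C)" for C
    unfolding closed_sequential_limits
  proof (intro allI impI, elim conjE)
    fix x l assume x: "\<forall>n. x n \<in> K C" and xl: "x \<longlonglongrightarrow> l"
    have "(\<lambda>n. x n \<bullet> m) \<longlonglongrightarrow> l \<bullet> m" by (intro tendsto_intros xl)
    moreover have "(\<lambda>n. x n \<bullet> m) = (\<lambda>n. \<nu>)" using x by (auto simp: K_def)
    ultimately have "l \<bullet> m = \<nu>" by (simp add: LIMSEQ_const_iff)
    moreover have "f l \<le> ereal C"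
    proof -
      have "f l \<le> liminf (\<lambda>n. f (x n))" by (rule lscf[OF xl])
      also have "\<dots> \<le> liminf (\<lambda>n. ereal C)"
        using x by (intro Liminf_mono always_eventually) (auto simp: K_def)
      also have "\<dots> = ereal C" by (simp add: Liminf_const)
      finally show ?thesis .
    qed
    ultimately show "l \<in> K C" by (simp add: K_def)
  qed
  have cpt: "compact (K C)" for C
    using bdd cl compact_eq_bounded_closed by blast
  have "(INF \<pi>\<in>Pi_nu M S0 S1 r 1. f \<pi>) < \<infinity>"
    using assms(12) unfolding rho_nu_def f_def by (simp add: less_top)
  then obtain \<pi>1 where \<pi>1: "\<pi>1 \<bullet> m = 1" "f \<pi>1 < \<infinity>" unfolding INF_less_iff Pi by auto
  define \<pi>0 where "\<pi>0 = \<nu> *\<^sub>R \<pi>1"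
  have \<pi>0m: "\<pi>0 \<bullet> m = \<nu>" using \<pi>1 by (simp add: \<pi>0_def)
  have "f \<pi>0 = ereal \<nu> * f \<pi>1" unfolding \<pi>0_def using nu by (rule hom)
  then have "\<bar>f \<pi>0\<bar> \<noteq> \<infinity>" using \<pi>1(2) notinf[of \<pi>1] by (cases "f \<pi>1") auto
  then obtain c0 where c0: "f \<pi>0 = ereal c0" by (cases "f \<pi>0") auto
  have \<pi>0K: "\<pi>0 \<in> K c0" using \<pi>0m c0 by (simp add: K_def)
  obtain w where w: "\<And>n. w n \<in> f ` K c0" "w \<longlonglongrightarrow> Inf (f ` K c0)"
    using Inf_as_limit[of "f ` K c0"] \<pi>0K by blast
  then have "\<forall>n. \<exists>x\<in>K c0. w n = f x" by blast
  then obtain p where p: "\<And>n. p n \<in> K c0" "\<And>n. w n = f (p n)" by metis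
  have "seq_compact (K c0)" by (rule compact_imp_seq_compact[OF cpt])
  then obtain l s where lK: "l \<in> K c0" and s: "strict_mono s" and pl: "(p \<circ> s) \<longlonglongrightarrow> l"
    using p(1) by (metis seq_compactE)
  have "f l \<le> liminf (\<lambda>n. f ((p \<circ> s) n))" by (rule lscf[OF pl])
  also have "\<dots> = liminf (\<lambda>n. (w \<circ> s) n)" by (simp add: p(2))
  also have "\<dots> = Inf (f ` K c0)"
    by (intro lim_imp_Liminf trivial_limit_sequentially LIMSEQ_subseq_LIMSEQ w(2) s)
  finally have lmin: "f l \<le> f x" if "x \<in> K c0" for x
    using that by (meson INF_lower order.trans)
  have lm: "l \<bullet> m = \<nu>" and lc: "f l \<le> ereal c0" using lK by (auto simp: K_def)
  have lopt: "f l \<le> f \<pi>'" if "\<pi>' \<bullet> m = \<nu>" for \<pi>'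
  proof (cases "f \<pi>' \<le> ereal c0")
    case True then show ?thesis using lmin that by (simp add: K_def)
  next
    case False then show ?thesis using lmin[OF \<pi>0K] c0 by simp
  qed
  have "\<bar>f l\<bar> \<noteq> \<infinity>" using lc notinf[of l] by (cases "f l") auto
  then obtain cl where fcl: "f l = ereal cl" by (cases "f l") auto
  have eq: "rho_opt M S0 S1 r \<rho> \<nu> = K cl"
    unfolding opt K_def using lopt lm fcl
    by (auto intro: order.trans simp del: ereal_less_eq)
  have "l \<in> K cl" using lm fcl by (simp add: K_def)
  then show "rho_opt M S0 S1 r \<rho> \<nu> \<noteq> {} \<and> compact (rho_opt M S0 S1 r \<rho> \<nu>)"
    using eq cpt by auto
qed

end
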